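(* Let $\varphi(x)=\sum_{i\ge0}\gamma_i x^i\in\mathbb{C}[[x]]$. Then $\varphi(x)$ is symplectic if and only if for every $n\ge0$, $$\gamma_{2n+1}=\sum_i {n \brack i}\gamma_{2i}.$$ In particular, for every choice of $\gamma_0,\gamma_2,\gamma_4,\dots\in\mathbb{C}$ there is a unique symplectic power series with these even coefficients, determined by this rule.
   Context: A formal power series $\varphi(x)=\sum_{i\ge0}\gamma_i x^i$ is called symplectic if for every $m\ge1$ one has $\sum_{k=0}^{m-1}(-1)^k\binom{m-1}{k}\gamma_{m+k}=0$. The Euler polynomials $E_n(x)$ are defined by $\frac{2e^{xt}}{e^t+1}=\sum_{n\ge0}E_n(x)\frac{t^n}{n!}$. For $n\ge0$ the integers ${n\brack i}$ are defined by $x\big(x^{2n}-E_{2n}(x)\big)=\sum_i {n\brack i}x^{2i}$ (the polynomial $x^{2n}-E_{2n}(x)$ contains only odd powers of $x$); in particular ${n\brack i}=0$ for $i\le0$ or $i>n$. *)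

theory Defs
  imports "HOL-Computational_Algebra.Computational_Algebra"
begin

definition symplectic :: "complex fps \<Rightarrow> bool" where
  "symplectic \<phi> \<longleftrightarrow>
     (\<forall>m::nat. m \<ge> 1 \<longrightarrow>
        (\<Sum>k=0..m-1. (-1)^k * of_nat ((m-1) choose k) * fps_nth \<phi> (m+k)) = 0)"

text \<open>Value of the Euler polynomial E_n at x, read off the generating function
  2 e^(x t) / (e^t + 1) = sum_n E_n(x) t^n / n!.\<close>
definition euler_val :: "nat \<Rightarrow> complex \<Rightarrow> complex" where
  "euler_val n x = fact n * fps_nth (2 * fps_exp x * inverse (fps_exp 1 + 1)) n"

text \<open>The Euler polynomial E_n as a polynomial (unique since complex is infinite).\<close>
definition euler_poly :: "nat \<Rightarrow> complex poly" where
  "euler_poly n = (THE p. \<forall>x. poly p x = euler_val n x)"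

definition euler_bracket :: "nat \<Rightarrow> nat \<Rightarrow> complex" where
  "euler_bracket n i = coeff ([:0, 1:] * (monom 1 (2*n) - euler_poly (2*n))) (2*i)"

end

theory Submission imports Defs begin


definition EI :: "complex fps" where "EI = inverse (fps_exp 1 + 1)"

lemma EI_mult: "(fps_exp 1 + 1) * EI = 1"
  unfolding EI_def by (rule inverse_mult_eq_1') simp

definition EQ :: "nat \<Rightarrow> complex poly" where
  "EQ n = (\<Sum>k\<le>n. monom (2 * fact n * EI $ (n-k) / fact k) k)"

lemma two_nth[simp]: "(2 * f :: complex fps) $ n = 2 * f $ n"
  by (simp add: numeral_fps_const)

lemma euler_val_EQ: "poly (EQ n) x = euler_val n x"
proof -
  have "euler_val n x = fact n * (\<Sum>k=0..n. (2 * fps_exp x) $ k * EI $ (n-k))"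
    unfolding euler_val_def EI_def by (subst fps_mult_nth) simp
  also have "\<dots> = (\<Sum>k\<le>n. 2 * fact n * EI $ (n-k) / fact k * x^k)"
    unfolding atLeast0AtMost sum_distrib_left
  proof (rule sum.cong)
    fix k assume "k \<in> {..n}"
    have "(2 * fps_exp x) $ k = 2 * x^k / fact k" by simp
    then show "fact n * ((2 * fps_exp x) $ k * EI $ (n - k)) = 2 * fact n * EI $ (n-k) / fact k * x^k"
      by simp
  qed simp
  finally show ?thesis unfolding EQ_def poly_sum poly_monom by simp
qed

lemma euler_poly_eq: "euler_poly n = EQ n"
  unfolding euler_poly_def
proof (rule the_equality)
  show "\<forall>x. poly (EQ n) x = euler_val n x" by (simp add: euler_val_EQ)
  fix p assume "\<forall>x. poly p x = euler_val n x"
  then have "poly p = poly (EQ n)" by (auto simp: euler_val_EQ)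
  then show "p = EQ n" by (simp add: poly_eq_poly_eq_iff)
qed

lemma euler_poly_val: "poly (euler_poly n) x = euler_val n x"
  by (simp add: euler_poly_eq euler_val_EQ)

lemma E_gen: "euler_val n x = fact n * (2 * fps_exp x * EI) $ n"
  by (simp add: euler_val_def EI_def)

lemma E_shift: "euler_val n x + euler_val n (x+1) = 2 * x^n"
proof -
  have "2 * fps_exp x * EI + 2 * fps_exp (x+1) * EI = 2 * fps_exp x * ((fps_exp 1 + 1) * EI)"
    by (simp add: fps_exp_add_mult algebra_simps)
  also have "\<dots> = 2 * fps_exp x" by (simp add: EI_mult)
  finally have "(2 * fps_exp x * EI) $ n + (2 * fps_exp (x+1) * EI) $ n = (2 * fps_exp x) $ n"
    by (metis fps_add_nth)
  then have "fact n * (2 * fps_exp x * EI) $ n + fact n * (2 * fps_exp (x+1) * EI) $ n = fact n * (2 * x^n / fact n)"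
    by (simp only: distrib_left[symmetric]) simp
  then show ?thesis unfolding E_gen by simp
qed

definition refl :: "complex fps \<Rightarrow> complex fps" where
  "refl f = Abs_fps (\<lambda>n. (-1)^n * f $ n)"

lemma refl_nth[simp]: "refl f $ n = (-1)^n * f $ n" by (simp add: refl_def)

lemma refl_mult: "refl (f * g) = refl f * refl g"
proof (rule fps_ext)
  fix n
  have "refl (f*g) $ n = (\<Sum>i=0..n. (-1)^n * (f$i * g$(n-i)))"
    by (simp add: fps_mult_nth sum_distrib_left)
  also have "\<dots> = (\<Sum>i=0..n. ((-1)^i * f$i) * ((-1)^(n-i) * g$(n-i)))"
  proof (rule sum.cong)
    fix i assume "i \<in> {0..n}"
    then have "(-1::complex)^n = (-1)^i * (-1)^(n-i)" by (simp add: power_add[symmetric])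
    then show "(-1)^n * (f$i * g$(n-i)) = ((-1)^i * f$i) * ((-1)^(n-i) * g$(n-i))" by simp
  qed simp
  finally show "refl (f*g) $ n = (refl f * refl g) $ n" by (simp add: fps_mult_nth)
qed

lemma refl_add: "refl (f + g) = refl f + refl g"
  by (rule fps_ext) (simp add: algebra_simps)

lemma refl_one: "refl 1 = 1" by (rule fps_ext) simp
lemma refl_two: "refl 2 = 2" by (rule fps_ext) (simp add: numeral_fps_const)

lemma refl_exp: "refl (fps_exp a) = fps_exp (-a)"
proof (rule fps_ext)
  fix n
  have "(-a)^n = (-1)^n * a^n" by (rule power_minus)
  then show "refl (fps_exp a) $ n = fps_exp (-a) $ n" by simp
qed

lemma E_refl: "euler_val n (1-x) = (-1)^n * euler_val n x"
proof -
  let ?E = "2 * fps_exp x * EI"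
  have r1: "refl EI * (fps_exp (-1) + 1) = 1"
    using arg_cong[OF EI_mult, of refl]
    by (simp add: refl_mult refl_add refl_one refl_exp mult.commute)
  have "refl ?E * (fps_exp 1 + 1) = 2 * fps_exp (-x) * (refl EI * (fps_exp (-1) + 1)) * fps_exp 1"
    by (simp add: refl_mult refl_two refl_exp algebra_simps fps_exp_add_mult[symmetric])
  also have "\<dots> = 2 * fps_exp (1-x)"
    using fps_exp_add_mult[of 1 "-x"] by (simp only: r1) (simp add: algebra_simps)
  finally have "refl ?E * (fps_exp 1 + 1) * EI = 2 * fps_exp (1-x) * EI" by simp
  then have "refl ?E = 2 * fps_exp (1-x) * EI" by (simp add: EI_mult mult.assoc)
  then have "refl ?E $ n = (2 * fps_exp (1-x) * EI) $ n" by simp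
  then show ?thesis unfolding E_gen by (simp del: fps_exp_nth)
qed




abbreviation P where "P n \<equiv> euler_poly n"

lemma P_shift: "P n + pcompose (P n) [:1,1:] = monom 2 n"
proof -
  have "poly (P n + pcompose (P n) [:1,1:]) = poly (monom 2 n)"
  proof
    fix x show "poly (P n + pcompose (P n) [:1,1:]) x = poly (monom 2 n) x"
      using E_shift[of n x] by (simp add: poly_pcompose euler_poly_val poly_monom add.commute)
  qed
  then show ?thesis by (simp add: poly_eq_poly_eq_iff)
qed

lemma P_refl: "pcompose (P n) [:1,-1:] = smult ((-1)^n) (P n)"
proof -
  have "poly (pcompose (P n) [:1,-1:]) = poly (smult ((-1)^n) (P n))"
  proof
    fix x show "poly (pcompose (P n) [:1,-1:]) x = poly (smult ((-1)^n) (P n)) x"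
      using E_refl[of n x] by (simp add: poly_pcompose euler_poly_val)
  qed
  then show ?thesis by (simp add: poly_eq_poly_eq_iff)
qed

lemma P_deg_lc: "degree (P n) = n \<and> lead_coeff (P n) = 1"
proof -
  define p where "p = P n"
  define d where "d = degree p"
  have sh: "p + pcompose p [:1,1:] = monom 2 n" unfolding p_def by (rule P_shift)
  have "p \<noteq> 0"
  proof
    assume "p = 0" then have "monom (2::complex) n = 0" using sh by simp
    then show False by simp
  qed
  have lcq: "lead_coeff (pcompose p [:1,1:]) = lead_coeff p"
    by (subst lead_coeff_comp) simp_all
  have dq: "degree (pcompose p [:1,1:]) = d" unfolding d_def by (simp add: degree_pcompose)
  have "coeff (p + pcompose p [:1,1:]) d = 2 * lead_coeff p"
    using lcq dq unfolding d_def by simp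
  then have c: "coeff (monom 2 n) d = 2 * lead_coeff p" using sh by simp
  with \<open>p \<noteq> 0\<close> have "d = n" by (auto simp: coeff_monom split: if_splits)
  with c have "lead_coeff p = 1" by (simp add: coeff_monom d_def)
  with \<open>d = n\<close> show ?thesis unfolding p_def d_def by simp
qed

lemma coeff_neg: "coeff (pcompose p [:0,-1::'a::comm_ring_1:]) j = (-1)^j * coeff p j"
proof (induction p arbitrary: j)
  case 0 then show ?case by simp
next
  case (pCons a p)
  show ?case
  proof (cases j)
    case 0 then show ?thesis by (simp add: pcompose_pCons)
  next
    case (Suc j') then show ?thesis using pCons.IH[of j'] by (simp add: pcompose_pCons)
  qed
qed

lemma P_neg:
  assumes "even n"
  shows "P n + pcompose (P n) [:0,-1:] = monom 2 n"
proof -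
  have "poly (P n + pcompose (P n) [:0,-1:]) = poly (monom 2 n)"
  proof
    fix x
    have "euler_val n (1 - (-x)) = euler_val n (-x)" using E_refl[of n "-x"] assms by simp
    then show "poly (P n + pcompose (P n) [:0,-1:]) x = poly (monom 2 n) x"
      using E_shift[of n x] by (simp add: poly_pcompose euler_poly_val poly_monom add.commute)
  qed
  then show ?thesis by (simp add: poly_eq_poly_eq_iff)
qed

lemma P_even_coeff:
  assumes "even m" "even j"
  shows "coeff (monom 1 m - P m) j = 0"
proof -
  have "coeff (P m + pcompose (P m) [:0,-1:]) j = coeff (monom 2 m) j" using P_neg[OF assms(1)] by simp
  then have "2 * coeff (P m) j = (if m = j then 2 else 0)"
    using assms(2) by (simp add: coeff_neg coeff_monom)
  then show ?thesis by (auto simp: coeff_monom split: if_splits)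
qed




definition L :: "complex fps \<Rightarrow> complex poly \<Rightarrow> complex" where
  "L \<phi> p = (\<Sum>i\<le>degree p. coeff p i * \<phi>$i)"

lemma L_bound:
  assumes "degree p \<le> N"
  shows "L \<phi> p = (\<Sum>i\<le>N. coeff p i * \<phi>$i)"
  unfolding L_def
  by (rule sum.mono_neutral_left) (use assms in \<open>auto simp: coeff_eq_0\<close>)

lemma L_add: "L \<phi> (p + q) = L \<phi> p + L \<phi> q"
proof -
  let ?N = "max (degree p) (degree q)"
  have "degree (p + q) \<le> ?N" by (rule degree_add_le) auto
  then show ?thesis
    by (simp add: L_bound[of _ ?N] sum.distrib algebra_simps)
qed

lemma L_smult: "L \<phi> (smult c p) = c * L \<phi> p"
  by (simp add: L_bound[of "smult c p" "degree p"] sum_distrib_left L_def algebra_simps)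

lemma L_zero[simp]: "L \<phi> 0 = 0" by (simp add: L_def)

lemma L_diff: "L \<phi> (p - q) = L \<phi> p - L \<phi> q"
  using L_add[of \<phi> "p - q" q] by simp

lemma L_sum: "L \<phi> (\<Sum>t\<in>A. p t) = (\<Sum>t\<in>A. L \<phi> (p t))"
  by (induction A rule: infinite_finite_induct) (simp_all add: L_add)

lemma L_monom: "L \<phi> (monom c n) = c * \<phi>$n"
proof -
  have "(\<Sum>i\<le>n. coeff (monom c n) i * \<phi>$i) = (\<Sum>i\<le>n. if i = n then c * \<phi>$n else 0)"
    by (rule sum.cong) (auto simp: coeff_monom)
  then show ?thesis by (simp add: L_bound[of "monom c n" n] degree_monom_le)
qed

lemma sym_kill:
  fixes b :: "nat \<Rightarrow> complex poly"
  assumes bs: "\<And>k. pcompose (b k) [:1,-1:] = b k" and bd: "\<And>k. degree (b k) = 2*k"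
    and bl: "\<And>k. lead_coeff (b k) \<noteq> 0" and bL: "\<And>k. L \<phi> ([:0,1:] * b k) = 0"
  shows "pcompose q [:1,-1:] = q \<Longrightarrow> L \<phi> ([:0,1:] * q) = 0"
proof (induction "degree q" arbitrary: q rule: less_induct)
  case less
  show ?case
  proof (cases "q = 0")
    case True then show ?thesis by simp
  next
    case False
    have "lead_coeff (pcompose q [:1,-1:]) = lead_coeff q * (-1)^degree q"
      by (subst lead_coeff_comp) simp_all
    then have "lead_coeff q * (-1)^degree q = lead_coeff q" using less.prems by simp
    with False have "(-1::complex)^degree q = 1" by simp
    then have "even (degree q)" by (metis neg_one_odd_power one_neq_neg_one)
    then obtain k where k: "degree q = 2*k" by blast
    define c where "c = lead_coeff q / lead_coeff (b k)"
    define q' where "q' = q - smult c (b k)"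
    have s': "pcompose q' [:1,-1:] = q'"
      unfolding q'_def by (simp add: pcompose_diff pcompose_smult bs less.prems)
    have d': "degree q' \<le> 2*k" unfolding q'_def
      using degree_diff_le[of q "2*k" "smult c (b k)"] degree_smult_le[of c "b k"] bd[of k] k by simp
    have c': "coeff q' (2*k) = 0" unfolding q'_def c_def using bl[of k] k bd[of k] by simp
    have e: "[:0,1:] * q = [:0,1:] * q' + smult c ([:0,1:] * b k)"
      unfolding q'_def by (simp add: algebra_simps)
    have "L \<phi> ([:0,1:] * q') = 0"
    proof (cases "q' = 0")
      case True then show ?thesis by simp
    next
      case False
      then have "coeff q' (degree q') \<noteq> 0" by simp
      with c' d' have "degree q' < degree q" using k by (cases "degree q' = 2*k") auto
      then show ?thesis using less.hyps s' by blast
    qed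
    then show ?thesis unfolding e L_add L_smult bL by simp
  qed
qed

abbreviation W where "W \<equiv> [:0,1,-1::complex:]"

lemma W_sym: "pcompose (W^j) [:1,-1:] = W^j"
proof -
  have "poly (pcompose (W^j) [:1,-1:]) = poly (W^j)"
  proof
    fix x :: complex
    show "poly (pcompose (W^j) [:1,-1:]) x = poly (W^j) x"
      by (simp add: poly_pcompose algebra_simps)
  qed
  then show ?thesis by (simp add: poly_eq_poly_eq_iff)
qed

lemma W_deg: "degree (W^j) = 2*j"
  by (subst degree_power_eq) auto

lemma W_lc: "lead_coeff (W^j) \<noteq> 0"
  by (simp add: lead_coeff_power)

lemma W_expand: "[:0,1:] * W^j = (\<Sum>t\<le>j. monom ((-1)^t * of_nat (j choose t)) (j+1+t))"
proof -
  have "poly ([:0,1:] * W^j) = poly (\<Sum>t\<le>j. monom ((-1)^t * of_nat (j choose t)) (j+1+t))"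
  proof
    fix x :: complex
    have "poly ([:0,1:] * W^j) x = x^(j+1) * (-x + 1)^j"
      by (simp add: power_mult_distrib[symmetric] algebra_simps)
    also have "\<dots> = x^(j+1) * (\<Sum>t\<le>j. of_nat (j choose t) * (-x)^t * 1^(j-t))"
      by (subst binomial_ring) simp
    also have "\<dots> = (\<Sum>t\<le>j. (-1)^t * of_nat (j choose t) * x^(j+1+t))"
      unfolding sum_distrib_left
    proof (rule sum.cong)
      fix t assume "t \<in> {..j}"
      have "(-x)^t = (-1)^t * x^t" by (rule power_minus)
      then show "x^(j+1) * (of_nat (j choose t) * (-x)^t * 1^(j-t)) = (-1)^t * of_nat (j choose t) * x^(j+1+t)"
        by (simp add: power_add)
    qed simp
    finally show "poly ([:0,1:] * W^j) x = poly (\<Sum>t\<le>j. monom ((-1)^t * of_nat (j choose t)) (j+1+t)) x"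
      by (simp add: poly_sum poly_monom)
  qed
  then show ?thesis by (simp add: poly_eq_poly_eq_iff)
qed

lemma sympl_eq: "L \<phi> ([:0,1:] * W^j) = (\<Sum>k\<le>j. (-1)^k * of_nat (j choose k) * \<phi> $ (Suc j + k))"
  unfolding W_expand L_sum L_monom by simp

lemma sympl_iff: "symplectic \<phi> \<longleftrightarrow> (\<forall>j. L \<phi> ([:0,1:] * W^j) = 0)"
  unfolding symplectic_def
proof safe
  fix j assume h: "\<forall>m\<ge>1. (\<Sum>k = 0..m - 1. (- 1) ^ k * of_nat (m - 1 choose k) * \<phi> $ (m + k)) = 0"
  from h[rule_format, of "Suc j"] show "L \<phi> ([:0,1:] * W^j) = 0"
    unfolding sympl_eq by (simp add: atLeast0AtMost)
next
  fix m :: nat assume h: "\<forall>j. L \<phi> ([:0,1:] * W^j) = 0" and m: "1 \<le> m"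
  then obtain j where j: "m = Suc j" by (cases m) auto
  from h[rule_format, of j] show "(\<Sum>k = 0..m - 1. (- 1) ^ k * of_nat (m - 1 choose k) * \<phi> $ (m + k)) = 0"
    unfolding sympl_eq j by (simp add: atLeast0AtMost)
qed




lemma sum_even_odd: "(\<Sum>j<2*(n::nat). (f j :: complex)) = (\<Sum>i<n. f (2*i)) + (\<Sum>i<n. f (2*i+1))"
  by (induction n) (simp_all add: algebra_simps)

lemma P2_sym: "pcompose (P (2*k)) [:1,-1:] = P (2*k)"
  using P_refl[of "2*k"] by simp

lemma B_iff: "L \<phi> ([:0,1:] * P (2*n)) = 0 \<longleftrightarrow>
   fps_nth \<phi> (2*n+1) = (\<Sum>i\<le>n. euler_bracket n i * fps_nth \<phi> (2*i))"
proof -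
  define R where "R = [:0,1:] * (monom 1 (2*n) - P (2*n))"
  have dP: "degree (P (2*n)) = 2*n" using P_deg_lc[of "2*n"] by blast
  have lP: "lead_coeff (P (2*n)) = 1" using P_deg_lc[of "2*n"] by blast
  have e: "[:0,1:] * P (2*n) = monom 1 (2*n+1) - R"
    unfolding R_def by (simp add: algebra_simps monom_Suc)
  have dR: "degree R \<le> 2*n+1" unfolding R_def
    by (rule order_trans[OF degree_mult_le]) (use degree_diff_le[of "monom 1 (2*n)" "2*n" "P (2*n)"] dP in \<open>auto simp: degree_monom_le\<close>)
  have odd0: "coeff R (2*i+1) = 0" for i
    unfolding R_def using P_even_coeff[of "2*n" "2*i"] by (simp add: coeff_pCons)
  have "L \<phi> R = (\<Sum>j<2*(n+1). coeff R j * \<phi>$j)"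
    using L_bound[OF dR] by (simp add: lessThan_Suc_atMost[symmetric])
  also have "\<dots> = (\<Sum>i<n+1. coeff R (2*i) * \<phi>$(2*i))"
    by (simp only: sum_even_odd odd0) simp
  also have "\<dots> = (\<Sum>i\<le>n. euler_bracket n i * \<phi>$(2*i))"
    unfolding euler_bracket_def R_def by (simp add: lessThan_Suc_atMost)
  finally have "L \<phi> ([:0,1:] * P (2*n)) = \<phi>$(2*n+1) - (\<Sum>i\<le>n. euler_bracket n i * \<phi>$(2*i))"
    unfolding e L_diff L_monom by simp
  then show ?thesis by simp
qed

theorem theorem5p1:
  shows "(\<forall>\<phi>::complex fps. symplectic \<phi> \<longleftrightarrow>
            (\<forall>n. fps_nth \<phi> (2*n+1) = (\<Sum>i\<le>n. euler_bracket n i * fps_nth \<phi> (2*i))))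
       \<and> (\<forall>g::nat \<Rightarrow> complex. \<exists>!\<phi>::complex fps. symplectic \<phi> \<and> (\<forall>n. fps_nth \<phi> (2*n) = g n))"
proof -
  have part1: "symplectic \<phi> \<longleftrightarrow>
            (\<forall>n. fps_nth \<phi> (2*n+1) = (\<Sum>i\<le>n. euler_bracket n i * fps_nth \<phi> (2*i)))" for \<phi>
  proof
    assume "symplectic \<phi>"
    then have h: "\<And>k. L \<phi> ([:0,1:] * W^k) = 0" using sympl_iff by blast
    have "L \<phi> ([:0,1:] * P (2*n)) = 0" for n
      by (rule sym_kill[of "\<lambda>k. W^k", OF W_sym W_deg W_lc h P2_sym])
    then show "\<forall>n. fps_nth \<phi> (2*n+1) = (\<Sum>i\<le>n. euler_bracket n i * fps_nth \<phi> (2*i))"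
      using B_iff by blast
  next
    assume "\<forall>n. fps_nth \<phi> (2*n+1) = (\<Sum>i\<le>n. euler_bracket n i * fps_nth \<phi> (2*i))"
    then have h: "\<And>k. L \<phi> ([:0,1:] * P (2*k)) = 0" using B_iff by blast
    have "L \<phi> ([:0,1:] * W^j) = 0" for j
      by (rule sym_kill[of "\<lambda>k. P (2*k)", OF P2_sym _ _ h W_sym]) (metis P_deg_lc, metis P_deg_lc one_neq_zero)
    then show "symplectic \<phi>" using sympl_iff by blast
  qed
  have part2: "\<exists>!\<phi>::complex fps. symplectic \<phi> \<and> (\<forall>n. fps_nth \<phi> (2*n) = g n)" for g
  proof -
    define \<phi> where "\<phi> = Abs_fps (\<lambda>m. if even m then g (m div 2)
        else (\<Sum>i\<le>m div 2. euler_bracket (m div 2) i * g i))"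
    have ev: "\<phi> $ (2*n) = g n" for n unfolding \<phi>_def by simp
    have "\<phi> $ (2*n+1) = (\<Sum>i\<le>n. euler_bracket n i * \<phi> $ (2*i))" for n
      unfolding ev unfolding \<phi>_def by simp
    then have a: "symplectic \<phi> \<and> (\<forall>n. \<phi> $ (2*n) = g n)" using part1 ev by blast
    show ?thesis
    proof (rule ex1I[of _ \<phi>])
      show "symplectic \<phi> \<and> (\<forall>n. \<phi> $ (2*n) = g n)" by (rule a)
    next
      fix \<psi> :: "complex fps"
      assume b: "symplectic \<psi> \<and> (\<forall>n. \<psi> $ (2*n) = g n)"
      show "\<psi> = \<phi>"
      proof (rule fps_ext)
        fix m
        show "\<psi> $ m = \<phi> $ m"
        proof (cases "even m")
          case True then obtain n where "m = 2*n" by blast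
          then show ?thesis using a b by simp
        next
          case False then obtain n where "m = 2*n+1" using oddE by blast
          then show ?thesis using a b part1 by simp
        qed
      qed
    qed
  qed
  show ?thesis using part1 part2 by blast
qed


end
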